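(* Let $u$ be a fast decreasing distribution on $\mathbb R^D$ (acting on $\mathbb C[\boldsymbol x]$) and $\mathcal Q_1,\mathcal Q_2\in\mathbb C[\boldsymbol x]$ coprime of degrees $m_1,m_2$ with $Z(\mathcal Q_2)\cap\operatorname{supp}u=\varnothing$. Let $\check u$ be a linear functional with $\mathcal Q_2\check u=u$ and put $\hat u=\mathcal Q_1\check u$ (so $\mathcal Q_2\hat u=\mathcal Q_1u$); assume $u$ and $\hat u$ quasi-definite, and let $R=\langle\check u,P(\boldsymbol x)\chi(\boldsymbol x)^\top\rangle$. Fix $k\in\mathbb Z_+$ and distinct nodes $\boldsymbol p_1,\dots,\boldsymbol p_{r_1}\in Z(\mathcal Q_1)$, $r_1=N_{k+m_1-1}-N_{k-1}$, and let $F=\big(\mathcal Q_1(\boldsymbol\Lambda)\big)_{[k],[k+m_1]}$. (i) If the matrix with block rows $\big(R_{[l],[0]},\dots,R_{[l],[k-1]},P_{[l]}(\boldsymbol p_1),\dots,P_{[l]}(\boldsymbol p_{r_1})\big)$, $l=0,\dots,k+m_1-1$, is nonsingular (this is the poisedness condition when $k<m_2$), then $$\hat P_{[k]}(\boldsymbol x)=\frac{F}{\mathcal Q_1(\boldsymbol x)}\Theta_*\begin{pmatrix}R_{[0],[0]}&\cdots&R_{[0],[k-1]}&P_{[0]}(\boldsymbol p_1)&\cdots&P_{[0]}(\boldsymbol p_{r_1})&P_{[0]}(\boldsymbol x)\\ \vdots&&\vdots&\vdots&&\vdots&\vdots\\ R_{[k+m_1],[0]}&\cdots&R_{[k+m_1],[k-1]}&P_{[k+m_1]}(\boldsymbol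 p_1)&\cdots&P_{[k+m_1]}(\boldsymbol p_{r_1})&P_{[k+m_1]}(\boldsymbol x)\end{pmatrix}$$ and $\hat H_{[k]}=F\,\Theta_*(\cdots)$ where the matrix is the same with last column $R_{[l],[k]}$ ($l=0,\dots,k+m_1$) in place of $P_{[l]}(\boldsymbol x)$. (ii) If $k\ge m_2$ and $\mathcal M_k=\{\boldsymbol\beta_1,\dots,\boldsymbol\beta_{r_2}\}$, $r_2=N_{k-1}-N_{k-m_2-1}$, are distinct multi-indices with $|\boldsymbol\beta_i|<k$ such that the set $\mathcal M_k\cup\{\boldsymbol p_j\}$ is poised, i.e. the matrix with block rows $\big(R_{[l],\boldsymbol\beta_1},\dots,R_{[l],\boldsymbol\beta_{r_2}},P_{[l]}(\boldsymbol p_1),\dots,P_{[l]}(\boldsymbol p_{r_1})\big)$, $l=k-m_2,\dots,k+m_1-1$, is nonsingular, then $$\hat P_{[k]}(\boldsymbol x)=\frac{F}{\mathcal Q_1(\boldsymbol x)}\Theta_*\begin{pmatrix}R_{[k-m_2],\boldsymbol\beta_1}&\cdots&R_{[k-m_2],\boldsymbol\beta_{r_2}}&P_{[k-m_2]}(\boldsymbol p_1)&\cdots&P_{[k-m_2]}(\boldsymbol p_{r_1})&P_{[k-m_2]}(\boldsymbol x)\\ \vdots&&\vdots&\vdots&&\vdots&\vdots\\ R_{[k+m_1],\boldsymbol\beta_1}&\cdots&R_{[k+m_1],\boldsymbol\beta_{r_2}}&P_{[k+m_1]}(\boldsymbol p_1)&\cdots&P_{[k+m_1]}(\boldsymbol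 p_{r_1})&P_{[k+m_1]}(\boldsymbol x)\end{pmatrix},$$ $\hat H_{[k]}\big((\mathcal Q_2(\boldsymbol\Lambda))_{[k-m_2],[k]}\big)^\top=F\,\Theta_*(\cdots)$ with the same matrix but last column $(H_{[k-m_2]},0,\dots,0)^\top$ (block rows $l=k-m_2,\dots,k+m_1$), and $\hat H_{[k]}=F\,\Theta_*(\cdots)$ with the same matrix but last column $R_{[l],[k]}$, $l=k-m_2,\dots,k+m_1$.
   Context: $[k]=\{\boldsymbol\alpha\in\mathbb Z_+^D:|\boldsymbol\alpha|=k\}$, $N_k=\binom{D+k}{D}=\sum_{j\le k}|[j]|$, $N_{-1}=0$. Multi-indices ordered by graded lexicographic order; $\chi(\boldsymbol x)$ vector of monomials in this order with blocks $\chi_{[k]}$; semi-infinite matrices have blocks $A_{[k],[l]}$; $A_{[l],\boldsymbol\beta}$ is the column of block row $[l]$ indexed by $\boldsymbol\beta$. $Z(\mathcal Q)\subset\mathbb C^D$ is the zero set of $\mathcal Q$. Spectral matrices $(\Lambda_a)_{\boldsymbol\alpha,\boldsymbol\beta}=\delta_{\boldsymbol\alpha+\boldsymbol e_a,\boldsymbol\beta}$, $\mathcal Q(\boldsymbol\Lambda)=\mathcal Q(\Lambda_1,\dots,\Lambda_D)$. For a linear functional $u$, $\langle Qu,P\rangle:=\langle u,QP\rangle$; moment matrix $G=\langle u,\chi\chi^\top\rangle$; quasi-definite: all block truncations nonsingular; then $G=S^{-1}HS^{-\top}$ with $S$ block lower unitriangular, $H$ block diagonal with blocks $H_{[k]}$;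 $P=S\chi$ with blocks $P_{[k]}$ are the monic multivariate orthogonal polynomials. Hatted symbols refer to $\hat u$. Last quasi-determinant: $\Theta_*\begin{pmatrix}A&B\\C&D\end{pmatrix}=D-CA^{-1}B$ with last displayed block row/column. *)

theory Defs
  imports "HOL-Analysis.Analysis"
begin

text \<open>A multi-index alpha in Z_+^D is a function 'd => nat (D = CARD('d)).
  A polynomial in C[x] is represented by its coefficient function with finite support.\<close>

type_synonym 'd mi = "'d \<Rightarrow> nat"
type_synonym 'd mpoly = "'d mi \<Rightarrow> complex"

definition deg_mi :: "'d::finite mi \<Rightarrow> nat" where
  "deg_mi \<alpha> = (\<Sum>a\<in>UNIV. \<alpha> a)"

definition blk :: "nat \<Rightarrow> 'd::finite mi set" where
  "blk k = {\<alpha>. deg_mi \<alpha> = k}"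

definition madd :: "'d mi \<Rightarrow> 'd mi \<Rightarrow> 'd mi" where
  "madd \<alpha> \<beta> = (\<lambda>a. \<alpha> a + \<beta> a)"

definition Nk :: "nat \<Rightarrow> int \<Rightarrow> nat" where
  "Nk D j = (if j < 0 then 0 else (D + nat j) choose D)"

definition psupp :: "'d mpoly \<Rightarrow> 'd mi set" where
  "psupp p = {\<alpha>. p \<alpha> \<noteq> 0}"

definition is_poly :: "'d mpoly \<Rightarrow> bool" where
  "is_poly p \<longleftrightarrow> finite (psupp p)"

definition mono :: "'d::finite mi \<Rightarrow> ('d \<Rightarrow> complex) \<Rightarrow> complex" where
  "mono \<alpha> x = (\<Prod>a\<in>UNIV. x a ^ \<alpha> a)"

definition peval :: "'d::finite mpoly \<Rightarrow> ('d \<Rightarrow> complex) \<Rightarrow> complex" where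
  "peval p x = (\<Sum>\<alpha>\<in>psupp p. p \<alpha> * mono \<alpha> x)"

definition pmul :: "'d mpoly \<Rightarrow> 'd mpoly \<Rightarrow> 'd mpoly" where
  "pmul p q = (\<lambda>\<gamma>. \<Sum>\<alpha>\<in>psupp p. \<Sum>\<beta>\<in>psupp q. if madd \<alpha> \<beta> = \<gamma> then p \<alpha> * q \<beta> else 0)"

definition pdvd :: "'d mpoly \<Rightarrow> 'd mpoly \<Rightarrow> bool" where
  "pdvd r q \<longleftrightarrow> (\<exists>s. is_poly s \<and> q = pmul r s)"

definition pdeg :: "'d::finite mpoly \<Rightarrow> nat" where
  "pdeg p = Max (deg_mi ` psupp p)"

definition coprime_poly :: "'d::finite mpoly \<Rightarrow> 'd mpoly \<Rightarrow> bool" where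
  "coprime_poly p q \<longleftrightarrow>
     (\<forall>r. is_poly r \<longrightarrow> pdvd r p \<longrightarrow> pdvd r q \<longrightarrow> (r \<noteq> (\<lambda>_. 0) \<and> pdeg r = 0))"

text \<open>Q(Lambda) for the spectral matrices (Lambda_a)_{alpha,beta} = delta_{alpha+e_a,beta}:
  (Q(Lambda))_{alpha,beta} = Q_{beta-alpha} if alpha <= beta componentwise, else 0.\<close>
definition specQ :: "'d mpoly \<Rightarrow> 'd mi \<Rightarrow> 'd mi \<Rightarrow> complex" where
  "specQ Q \<alpha> \<beta> = (if \<forall>a. \<alpha> a \<le> \<beta> a then Q (\<lambda>a. \<beta> a - \<alpha> a) else 0)"

text \<open>A linear functional v on C[x] is determined by its moments v(alpha) = <v, x^alpha>.\<close>


text \<open>(Q v): <Q v, x^alpha> = <v, Q x^alpha>\<close>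
definition fmul :: "'d mpoly \<Rightarrow> ('d mi \<Rightarrow> complex) \<Rightarrow> 'd mi \<Rightarrow> complex" where
  "fmul Q v \<alpha> = (\<Sum>\<beta>\<in>psupp Q. Q \<beta> * v (madd \<alpha> \<beta>))"

definition mom_mat :: "('d mi \<Rightarrow> complex) \<Rightarrow> 'd mi \<Rightarrow> 'd mi \<Rightarrow> complex" where
  "mom_mat v \<alpha> \<beta> = v (madd \<alpha> \<beta>)"

definition mmul :: "'j set \<Rightarrow> ('i \<Rightarrow> 'j \<Rightarrow> complex) \<Rightarrow> ('j \<Rightarrow> 'k \<Rightarrow> complex) \<Rightarrow> 'i \<Rightarrow> 'k \<Rightarrow> complex" where
  "mmul J A B i k = (\<Sum>j\<in>J. A i j * B j k)"

definition is_inverse_on :: "'i set \<Rightarrow> 'j set \<Rightarrow> ('i \<Rightarrow> 'j \<Rightarrow> complex) \<Rightarrow> ('j \<Rightarrow> 'i \<Rightarrow> complex) \<Rightarrow> bool" where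
  "is_inverse_on I J A B \<longleftrightarrow>
     (\<forall>i\<in>I. \<forall>i'\<in>I. mmul J A B i i' = (if i = i' then 1 else 0)) \<and>
     (\<forall>j\<in>J. \<forall>j'\<in>J. mmul I B A j j' = (if j = j' then 1 else 0))"

definition nonsingular_on :: "'i set \<Rightarrow> 'j set \<Rightarrow> ('i \<Rightarrow> 'j \<Rightarrow> complex) \<Rightarrow> bool" where
  "nonsingular_on I J A \<longleftrightarrow> finite I \<and> finite J \<and> (\<exists>B. is_inverse_on I J A B)"

definition minv :: "'i set \<Rightarrow> 'j set \<Rightarrow> ('i \<Rightarrow> 'j \<Rightarrow> complex) \<Rightarrow> 'j \<Rightarrow> 'i \<Rightarrow> complex" where
  "minv I J A = (SOME B. is_inverse_on I J A B)"

text \<open>Last quasi-determinant of the block matrix M with first rows I, last block row L,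
  first columns J, last block column K:  D - C A^{-1} B, indexed by L x K.\<close>
definition qdet_last :: "'i set \<Rightarrow> 'i set \<Rightarrow> 'j set \<Rightarrow> 'j set \<Rightarrow> ('i \<Rightarrow> 'j \<Rightarrow> complex) \<Rightarrow> 'i \<Rightarrow> 'j \<Rightarrow> complex" where
  "qdet_last I L J K M = (\<lambda>r c. M r c - mmul I (mmul J M (minv I J M)) M r c)"

definition quasi_definite :: "('d::finite mi \<Rightarrow> complex) \<Rightarrow> bool" where
  "quasi_definite v \<longleftrightarrow> (\<forall>k. nonsingular_on {\<alpha>. deg_mi \<alpha> \<le> k} {\<alpha>. deg_mi \<alpha> \<le> k} (mom_mat v))"

text \<open>Block factorization G = S^{-1} H S^{-T} of the moment matrix, written as S G S^T = H
  (S block lower unitriangular, hence invertible; all sums finite).\<close>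
definition mop_fact :: "('d::finite mi \<Rightarrow> complex) \<Rightarrow> ('d mi \<Rightarrow> 'd mi \<Rightarrow> complex)
    \<Rightarrow> ('d mi \<Rightarrow> 'd mi \<Rightarrow> complex) \<Rightarrow> bool" where
  "mop_fact v S H \<longleftrightarrow>
     (\<forall>\<alpha> \<beta>. deg_mi \<alpha> < deg_mi \<beta> \<longrightarrow> S \<alpha> \<beta> = 0) \<and>
     (\<forall>\<alpha> \<beta>. deg_mi \<alpha> = deg_mi \<beta> \<longrightarrow> S \<alpha> \<beta> = (if \<alpha> = \<beta> then 1 else 0)) \<and>
     (\<forall>\<alpha> \<beta>. deg_mi \<alpha> \<noteq> deg_mi \<beta> \<longrightarrow> H \<alpha> \<beta> = 0) \<and>
     (\<forall>\<alpha> \<delta>. (\<Sum>\<gamma>\<in>{\<gamma>. deg_mi \<gamma> \<le> deg_mi \<delta>}.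
                (\<Sum>\<beta>\<in>{\<beta>. deg_mi \<beta> \<le> deg_mi \<alpha>}. S \<alpha> \<beta> * mom_mat v \<beta> \<gamma>) * S \<delta> \<gamma>) = H \<alpha> \<delta>)"

text \<open>P = S chi: the entry P_alpha(x)\<close>
definition mop :: "('d::finite mi \<Rightarrow> 'd mi \<Rightarrow> complex) \<Rightarrow> 'd mi \<Rightarrow> ('d \<Rightarrow> complex) \<Rightarrow> complex" where
  "mop S \<alpha> x = (\<Sum>\<beta>\<in>{\<beta>. deg_mi \<beta> \<le> deg_mi \<alpha>}. S \<alpha> \<beta> * mono \<beta> x)"

text \<open>R = <w, P(x) chi(x)^T>: R_{alpha,beta} = <w, P_alpha x^beta>\<close>
definition Rmat :: "('d::finite mi \<Rightarrow> 'd mi \<Rightarrow> complex) \<Rightarrow> ('d mi \<Rightarrow> complex) \<Rightarrow> 'd mi \<Rightarrow> 'd mi \<Rightarrow> complex" where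
  "Rmat S w \<alpha> \<beta> = (\<Sum>\<gamma>\<in>{\<gamma>. deg_mi \<gamma> \<le> deg_mi \<alpha>}. S \<alpha> \<gamma> * w (madd \<gamma> \<beta>))"

text \<open>Column indices of the bordered matrices: R-columns (multi-indices), node columns, last column(s).\<close>
datatype ('a, 'b) qcol = RCol 'a | NCol nat | LCol 'b

definition bmat :: "('d::finite mi \<Rightarrow> 'd mi \<Rightarrow> complex) \<Rightarrow> ('d mi \<Rightarrow> 'd mi \<Rightarrow> complex)
    \<Rightarrow> (nat \<Rightarrow> 'd \<Rightarrow> complex) \<Rightarrow> ('d mi \<Rightarrow> 'b \<Rightarrow> complex) \<Rightarrow> 'd mi \<Rightarrow> ('d mi, 'b) qcol \<Rightarrow> complex" where
  "bmat S R p lastc \<alpha> c = (case c of RCol \<beta> \<Rightarrow> R \<alpha> \<beta> | NCol j \<Rightarrow> mop S \<alpha> (p j) | LCol b \<Rightarrow> lastc \<alpha> b)"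

fun dpart :: "'d::finite list \<Rightarrow> (real^'d \<Rightarrow> complex) \<Rightarrow> real^'d \<Rightarrow> complex" where
  "dpart [] f = f"
| "dpart (a # ds) f = (\<lambda>x. vector_derivative (\<lambda>t. dpart ds f (x + t *\<^sub>R axis a 1)) (at 0))"

definition smooth_fun :: "(real^'d::finite \<Rightarrow> complex) \<Rightarrow> bool" where
  "smooth_fun f \<longleftrightarrow> (\<forall>ds. continuous_on UNIV (dpart ds f) \<and>
       (\<forall>a x. (\<lambda>t. dpart ds f (x + t *\<^sub>R axis a 1)) differentiable (at 0)))"

definition Oc_step :: "nat \<Rightarrow> (real^'d::finite \<Rightarrow> complex) set" where
  "Oc_step k = {f. smooth_fun f \<and> (\<forall>ds. \<exists>C. \<forall>x. cmod (dpart ds f x) \<le> C * (1 + norm x ^ 2) ^ k)}"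

definition Oc :: "(real^'d::finite \<Rightarrow> complex) set" where
  "Oc = (\<Union>k. Oc_step k)"

definition Oc_seminorm :: "nat \<Rightarrow> nat \<Rightarrow> (real^'d::finite \<Rightarrow> complex) \<Rightarrow> real" where
  "Oc_seminorm k N f = (\<Sum>ds\<in>{ds. length ds \<le> N}. (SUP x. cmod (dpart ds f x) / (1 + norm x ^ 2) ^ k))"

text \<open>Fast decreasing (rapidly decreasing) distributions: the dual O_C' of O_C, i.e. linear functionals
  on O_C continuous on each step O_C^k of the inductive limit.\<close>
definition fast_decreasing_distribution :: "((real^'d::finite \<Rightarrow> complex) \<Rightarrow> complex) \<Rightarrow> bool" where
  "fast_decreasing_distribution u \<longleftrightarrow>
     (\<forall>f\<in>Oc. \<forall>g\<in>Oc. \<forall>c. u (\<lambda>x. f x + g x) = u f + u g \<and> u (\<lambda>x. c * f x) = c * u f) \<and>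
     (\<forall>k. \<exists>C N. \<forall>f\<in>Oc_step k. cmod (u f) \<le> C * Oc_seminorm k N f)"

definition test_fun :: "(real^'d::finite \<Rightarrow> complex) \<Rightarrow> bool" where
  "test_fun \<phi> \<longleftrightarrow> smooth_fun \<phi> \<and> compact (closure {x. \<phi> x \<noteq> 0})"

definition dist_supp :: "((real^'d::finite \<Rightarrow> complex) \<Rightarrow> complex) \<Rightarrow> (real^'d) set" where
  "dist_supp u = - {x. \<exists>U. open U \<and> x \<in> U \<and>
        (\<forall>\<phi>. test_fun \<phi> \<and> closure {y. \<phi> y \<noteq> 0} \<subseteq> U \<longrightarrow> u \<phi> = 0)}"

definition dmom :: "((real^'d::finite \<Rightarrow> complex) \<Rightarrow> complex) \<Rightarrow> 'd mi \<Rightarrow> complex" where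
  "dmom u \<alpha> = u (\<lambda>x. mono \<alpha> (\<lambda>a. complex_of_real (x $ a)))"

end

theory Submission
  imports Defs
begin

lemma deg_madd[simp]: "deg_mi (madd a b) = deg_mi a + deg_mi b"
  by (simp add: deg_mi_def madd_def sum.distrib)

lemma madd_comm: "madd a b = madd b a" by (simp add: madd_def add.commute)
lemma madd_assoc: "madd (madd a b) c = madd a (madd b c)" by (simp add: madd_def add.assoc)

lemma mono_madd: "mono (madd a b) x = mono a x * mono b x"
  by (simp add: mono_def madd_def power_add prod.distrib)

lemma le_deg: "\<alpha> a \<le> deg_mi (\<alpha>::'d::finite mi)"
  unfolding deg_mi_def by (rule member_le_sum) auto

lemma finite_D[simp]: "finite {\<alpha>::'d::finite mi. deg_mi \<alpha> \<le> n}"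
proof -
  have "{\<alpha>::'d::finite mi. deg_mi \<alpha> \<le> n} \<subseteq> {f. \<forall>x. (x \<in> UNIV \<longrightarrow> f x \<in> {..n}) \<and> (x \<notin> UNIV \<longrightarrow> f x = 0)}"
    using le_deg order_trans by fastforce
  moreover have "finite {f::'d mi. \<forall>x. (x \<in> UNIV \<longrightarrow> f x \<in> {..n}) \<and> (x \<notin> UNIV \<longrightarrow> f x = 0)}"
    by (rule finite_set_of_finite_funs) auto
  ultimately show ?thesis by (rule finite_subset)
qed

lemma finite_Dlt[simp]: "finite {\<alpha>::'d::finite mi. deg_mi \<alpha> < n}"
  by (rule finite_subset[OF _ finite_D[of n]]) auto

lemma finite_blk[simp]: "finite (blk n :: 'd::finite mi set)"
  unfolding blk_def by (rule finite_subset[OF _ finite_D[of n]]) auto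

lemma finite_Deq[simp]: "finite {\<alpha>::'d::finite mi. deg_mi \<alpha> = n}"
  by (rule finite_subset[OF _ finite_D[of n]]) auto

lemma finite_Dr[simp]: "finite {\<alpha>::'d::finite mi. m \<le> deg_mi \<alpha> \<and> deg_mi \<alpha> < n}"
  by (rule finite_subset[OF _ finite_Dlt[of n]]) auto


lemma tri_solve:
  fixes S :: "'d::finite mi \<Rightarrow> 'd mi \<Rightarrow> complex"
  assumes S0: "\<forall>\<alpha> \<beta>. deg_mi \<alpha> < deg_mi \<beta> \<longrightarrow> S \<alpha> \<beta> = 0"
    and S1: "\<forall>\<alpha> \<beta>. deg_mi \<alpha> = deg_mi \<beta> \<longrightarrow> S \<alpha> \<beta> = (if \<alpha> = \<beta> then 1 else 0)"
  shows "(\<forall>\<gamma>. n \<le> deg_mi \<gamma> \<longrightarrow> T \<gamma> = 0) \<Longrightarrow> \<exists>c. (\<forall>l. n \<le> deg_mi l \<longrightarrow> c l = 0) \<and>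
     (\<forall>\<gamma>. (\<Sum>l\<in>{l. deg_mi l < n}. c l * S l \<gamma>) = T \<gamma>) \<and> (\<forall>l. Suc (deg_mi l) = n \<longrightarrow> c l = T l)"
proof (induction n arbitrary: T)
  case 0
  then show ?case by (intro exI[of _ "\<lambda>_. 0"]) auto
next
  case (Suc n)
  define T' where "T' \<gamma> = T \<gamma> - (\<Sum>l\<in>blk n. T l * S l \<gamma>)" for \<gamma>
  have "\<forall>\<gamma>. n \<le> deg_mi \<gamma> \<longrightarrow> T' \<gamma> = 0"
  proof (intro allI impI)
    fix \<gamma> :: "'d mi" assume h: "n \<le> deg_mi \<gamma>"
    show "T' \<gamma> = 0"
    proof (cases "deg_mi \<gamma> = n")
      case True
      have "(\<Sum>l\<in>blk n. T l * S l \<gamma>) = (\<Sum>l\<in>blk n. if l = \<gamma> then T l else 0)"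
        by (rule sum.cong) (auto simp: blk_def S1 True)
      also have "\<dots> = T \<gamma>" using True by (simp add: sum.delta[OF finite_blk]) (simp add: blk_def)
      finally show ?thesis by (simp add: T'_def)
    next
      case False
      then have "(\<Sum>l\<in>blk n. T l * S l \<gamma>) = 0" using h S0 by (auto simp: blk_def intro!: sum.neutral)
      then show ?thesis using False h Suc.prems by (simp add: T'_def)
    qed
  qed
  from Suc.IH[OF this] obtain c' where c': "\<forall>l. n \<le> deg_mi l \<longrightarrow> c' l = 0"
     "\<forall>\<gamma>. (\<Sum>l\<in>{l. deg_mi l < n}. c' l * S l \<gamma>) = T' \<gamma>" by blast
  define c where "c l = (if deg_mi l = n then T l else c' l)" for l
  have split: "{l. deg_mi l < Suc n} = {l. deg_mi l < n} \<union> blk n" by (auto simp: blk_def)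
  show ?case
  proof (intro exI[of _ c] conjI allI impI)
    fix l :: "'d mi" assume "Suc n \<le> deg_mi l" then show "c l = 0" using c' Suc.prems by (auto simp: c_def)
  next
    fix \<gamma>
    have "(\<Sum>l\<in>{l. deg_mi l < Suc n}. c l * S l \<gamma>) = (\<Sum>l\<in>{l. deg_mi l < n}. c l * S l \<gamma>) + (\<Sum>l\<in>blk n. c l * S l \<gamma>)"
      unfolding split by (rule sum.union_disjoint) (auto simp: blk_def)
    also have "(\<Sum>l\<in>{l. deg_mi l < n}. c l * S l \<gamma>) = (\<Sum>l\<in>{l. deg_mi l < n}. c' l * S l \<gamma>)"
      by (rule sum.cong) (auto simp: c_def)
    also have "(\<Sum>l\<in>blk n. c l * S l \<gamma>) = (\<Sum>l\<in>blk n. T l * S l \<gamma>)"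
      by (rule sum.cong) (auto simp: c_def blk_def)
    finally show "(\<Sum>l\<in>{l. deg_mi l < Suc n}. c l * S l \<gamma>) = T \<gamma>" using c'(2) by (simp add: T'_def)
  next
    fix l :: "'d mi" assume "Suc (deg_mi l) = Suc n" then show "c l = T l" by (simp add: c_def)
  qed
qed


lemma mop_factD:
  assumes "mop_fact v S H"
  shows "\<forall>\<alpha> \<beta>. deg_mi \<alpha> < deg_mi \<beta> \<longrightarrow> S \<alpha> \<beta> = 0"
    "\<forall>\<alpha> \<beta>. deg_mi \<alpha> = deg_mi \<beta> \<longrightarrow> S \<alpha> \<beta> = (if \<alpha> = \<beta> then 1 else 0)"
    "\<And>\<alpha> \<beta>. deg_mi \<alpha> \<noteq> deg_mi \<beta> \<Longrightarrow> H \<alpha> \<beta> = 0"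
    "\<And>\<alpha> \<delta>. (\<Sum>\<gamma>\<in>{\<gamma>. deg_mi \<gamma> \<le> deg_mi \<delta>}. Rmat S v \<alpha> \<gamma> * S \<delta> \<gamma>) = H \<alpha> \<delta>"
  using assms unfolding mop_fact_def Rmat_def mom_mat_def by auto

lemma sum_ext_S:
  fixes S :: "'d::finite mi \<Rightarrow> 'd mi \<Rightarrow> complex"
  assumes S0: "\<forall>\<alpha> \<beta>. deg_mi \<alpha> < deg_mi \<beta> \<longrightarrow> S \<alpha> \<beta> = 0" and "deg_mi l \<le> m"
  shows "(\<Sum>\<gamma>\<in>{\<gamma>. deg_mi \<gamma> \<le> m}. f \<gamma> * S l \<gamma>) = (\<Sum>\<gamma>\<in>{\<gamma>. deg_mi \<gamma> \<le> deg_mi l}. f \<gamma> * S l \<gamma>)"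
  by (rule sum.mono_neutral_right) (use assms in auto)

lemma orth1:
  fixes S H :: "'d::finite mi \<Rightarrow> 'd mi \<Rightarrow> complex"
  assumes mf: "mop_fact v S H" and lt: "deg_mi \<beta> < deg_mi \<alpha>"
  shows "Rmat S v \<alpha> \<beta> = 0"
proof -
  note D = mop_factD[OF mf]
  have pre: "\<forall>\<gamma>. Suc (deg_mi \<beta>) \<le> deg_mi \<gamma> \<longrightarrow> (if \<gamma> = \<beta> then 1 else 0) = (0::complex)" by auto
  obtain c where c: "\<forall>\<gamma>. (\<Sum>l\<in>{l. deg_mi l < Suc (deg_mi \<beta>)}. c l * S l \<gamma>) = (if \<gamma> = \<beta> then 1 else 0)"
    using tri_solve[OF D(1) D(2) pre] by blast
  let ?D = "{\<gamma>::'d mi. deg_mi \<gamma> \<le> deg_mi \<beta>}"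
  have "Rmat S v \<alpha> \<beta> = (\<Sum>\<gamma>\<in>?D. Rmat S v \<alpha> \<gamma> * (if \<gamma> = \<beta> then 1 else 0))"
    by (simp add: if_distrib cong: if_cong)
  also have "\<dots> = (\<Sum>\<gamma>\<in>?D. Rmat S v \<alpha> \<gamma> * (\<Sum>l\<in>{l. deg_mi l < Suc (deg_mi \<beta>)}. c l * S l \<gamma>))"
    using c by simp
  also have "\<dots> = (\<Sum>l\<in>{l. deg_mi l < Suc (deg_mi \<beta>)}. c l * (\<Sum>\<gamma>\<in>?D. Rmat S v \<alpha> \<gamma> * S l \<gamma>))"
    by (simp add: sum_distrib_left sum.swap[of _ ?D] mult_ac)
  also have "\<dots> = (\<Sum>l\<in>{l. deg_mi l < Suc (deg_mi \<beta>)}. c l * H \<alpha> l)"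
    by (rule sum.cong[OF refl]) (simp add: sum_ext_S[OF D(1)] D(4))
  also have "\<dots> = 0"
    by (rule sum.neutral) (use lt D(3) in auto)
  finally show ?thesis .
qed

lemma orth2:
  fixes S H :: "'d::finite mi \<Rightarrow> 'd mi \<Rightarrow> complex"
  assumes mf: "mop_fact v S H" and eq: "deg_mi \<beta> = deg_mi \<alpha>"
  shows "Rmat S v \<alpha> \<beta> = H \<alpha> \<beta>"
proof -
  note D = mop_factD[OF mf]
  let ?n = "deg_mi \<alpha>"
  have split: "{\<gamma>::'d mi. deg_mi \<gamma> \<le> deg_mi \<beta>} = {\<gamma>. deg_mi \<gamma> < ?n} \<union> blk ?n"
    using eq by (auto simp: blk_def)
  have "H \<alpha> \<beta> = (\<Sum>\<gamma>\<in>{\<gamma>. deg_mi \<gamma> < ?n} \<union> blk ?n. Rmat S v \<alpha> \<gamma> * S \<beta> \<gamma>)"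
    using D(4)[of \<alpha> \<beta>] split by simp
  also have "\<dots> = (\<Sum>\<gamma>\<in>{\<gamma>. deg_mi \<gamma> < ?n}. Rmat S v \<alpha> \<gamma> * S \<beta> \<gamma>) + (\<Sum>\<gamma>\<in>blk ?n. Rmat S v \<alpha> \<gamma> * S \<beta> \<gamma>)"
    by (rule sum.union_disjoint) (auto simp: blk_def)
  also have "(\<Sum>\<gamma>\<in>{\<gamma>. deg_mi \<gamma> < ?n}. Rmat S v \<alpha> \<gamma> * S \<beta> \<gamma>) = 0"
    by (rule sum.neutral) (auto simp: orth1[OF mf])
  also have "(\<Sum>\<gamma>\<in>blk ?n. Rmat S v \<alpha> \<gamma> * S \<beta> \<gamma>) = (\<Sum>\<gamma>\<in>blk ?n. if \<gamma> = \<beta> then Rmat S v \<alpha> \<gamma> else 0)"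
    by (rule sum.cong) (auto simp: blk_def D(2) eq)
  also have "\<dots> = Rmat S v \<alpha> \<beta>" by (simp add: sum.delta'[OF finite_blk] blk_def eq)
  finally show ?thesis by simp
qed


lemma qdet_sol:
  fixes M :: "'i \<Rightarrow> 'j \<Rightarrow> complex"
  assumes fin: "finite I" "finite L" "finite J" and disj: "I \<inter> L = {}"
    and inv: "\<exists>B. is_inverse_on I J M B"
    and eqs: "\<forall>j\<in>J. (\<Sum>i\<in>I\<union>L. c i * M i j) = 0"
  shows "(\<Sum>i\<in>I\<union>L. c i * M i \<kappa>) = (\<Sum>l\<in>L. c l * qdet_last I L J K M l \<kappa>)"
proof -
  define B where "B = minv I J M"
  have iv: "is_inverse_on I J M B" using someI_ex[OF inv] unfolding B_def minv_def .
  have AB: "\<And>i i'. i\<in>I \<Longrightarrow> i'\<in>I \<Longrightarrow> (\<Sum>j\<in>J. M i j * B j i') = (if i=i' then 1 else 0)"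
    using iv unfolding is_inverse_on_def mmul_def by blast
  have un: "\<And>f. (\<Sum>i\<in>I\<union>L. f i) = (\<Sum>i\<in>I. f i) + (\<Sum>i\<in>L. f i)"
    by (rule sum.union_disjoint) (use fin disj in auto)
  have eqI: "(\<Sum>i\<in>I. c i * M i j) = - (\<Sum>l\<in>L. c l * M l j)" if j: "j\<in>J" for j
  proof -
    have "(\<Sum>i\<in>I. c i * M i j) + (\<Sum>l\<in>L. c l * M l j) = 0" using eqs j un[of "\<lambda>i. c i * M i j"] by simp
    then show ?thesis by (simp add: eq_neg_iff_add_eq_0)
  qed
  have ci: "c i' = - (\<Sum>j\<in>J. (\<Sum>l\<in>L. c l * M l j) * B j i')" if "i'\<in>I" for i'
  proof -
    have "c i' = (\<Sum>i\<in>I. c i * (if i = i' then 1 else 0))"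
      using that fin by (simp add: if_distrib cong: if_cong)
    also have "\<dots> = (\<Sum>i\<in>I. c i * (\<Sum>j\<in>J. M i j * B j i'))"
      by (rule sum.cong) (use AB that in auto)
    also have "\<dots> = (\<Sum>j\<in>J. (\<Sum>i\<in>I. c i * M i j) * B j i')"
      by (simp add: sum_distrib_left sum_distrib_right sum.swap[of _ I J] mult_ac)
    also have "\<dots> = (\<Sum>j\<in>J. (- (\<Sum>l\<in>L. c l * M l j)) * B j i')"
      by (rule sum.cong) (use eqI in auto)
    finally show ?thesis by (simp add: sum_negf)
  qed
  have "(\<Sum>i\<in>I. c i * M i \<kappa>) = (\<Sum>i\<in>I. - (\<Sum>j\<in>J. (\<Sum>l\<in>L. c l * M l j) * B j i) * M i \<kappa>)"
    by (rule sum.cong) (use ci in auto)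
  also have "\<dots> = - (\<Sum>l\<in>L. c l * mmul I (mmul J M B) M l \<kappa>)"
    unfolding mmul_def
    by (simp add: sum_distrib_left sum_distrib_right sum_negf mult_ac sum.swap[of _ I L] sum.swap[of _ J L])
  finally have "(\<Sum>i\<in>I. c i * M i \<kappa>) = - (\<Sum>l\<in>L. c l * mmul I (mmul J M B) M l \<kappa>)" .
  then show ?thesis
    unfolding un qdet_last_def B_def[symmetric]
    by (simp add: right_diff_distrib sum_subtractf)
qed


lemma specQ_sum:
  assumes "finite (psupp Q)"
  shows "(\<Sum>a\<in>psupp Q. if madd a \<alpha> = r then Q a else 0) = specQ Q \<alpha> r"
proof (cases "\<forall>i. \<alpha> i \<le> r i")
  case True
  define a0 where "a0 = (\<lambda>i. r i - \<alpha> i)"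
  have iff: "madd a \<alpha> = r \<longleftrightarrow> a = a0" for a
    using True by (auto simp: madd_def a0_def fun_eq_iff) (metis add_diff_cancel_right')
  have "(\<Sum>a\<in>psupp Q. if madd a \<alpha> = r then Q a else 0) = (\<Sum>a\<in>psupp Q. if a = a0 then Q a else 0)"
    by (simp add: iff)
  also have "\<dots> = Q a0" using assms by (simp add: sum.delta' psupp_def)
  finally show ?thesis using True by (simp add: specQ_def a0_def)
next
  case False
  have "madd a \<alpha> \<noteq> r" for a using False by (auto simp: madd_def)
  then show ?thesis using False unfolding specQ_def by auto
qed


lemma Hblock:
  fixes S H :: "'d::finite mi \<Rightarrow> 'd mi \<Rightarrow> complex"
  assumes mf: "mop_fact v S H" and qd: "quasi_definite v"
    and z: "\<forall>l''\<in>blk j. (\<Sum>l\<in>blk j. w' l * H l l'') = 0"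
  shows "\<forall>l\<in>blk j. w' l = 0"
proof -
  note D = mop_factD[OF mf]
  let ?D = "{\<gamma>::'d mi. deg_mi \<gamma> \<le> j}"
  define w where "w \<beta> = (\<Sum>l\<in>blk j. w' l * S l \<beta>)" for \<beta>
  define y where "y \<gamma> = (\<Sum>\<beta>\<in>?D. w \<beta> * mom_mat v \<beta> \<gamma>)" for \<gamma>
  have R: "(\<Sum>\<beta>\<in>?D. S l \<beta> * mom_mat v \<beta> \<gamma>) = Rmat S v l \<gamma>" if "l \<in> blk j" for l \<gamma>
    using that by (simp add: Rmat_def mom_mat_def blk_def)
  have st1: "(\<Sum>\<gamma>\<in>?D. y \<gamma> * S l'' \<gamma>) = 0" if "l'' \<in> ?D" for l''
  proof -
    have "(\<Sum>\<gamma>\<in>?D. y \<gamma> * S l'' \<gamma>) = (\<Sum>l\<in>blk j. w' l * (\<Sum>\<gamma>\<in>?D. (\<Sum>\<beta>\<in>?D. S l \<beta> * mom_mat v \<beta> \<gamma>) * S l'' \<gamma>))"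
    proof -
      have "(\<Sum>\<gamma>\<in>?D. y \<gamma> * S l'' \<gamma>) = (\<Sum>\<gamma>\<in>?D. \<Sum>\<beta>\<in>?D. \<Sum>l\<in>blk j. w' l * (S l \<beta> * (mom_mat v \<beta> \<gamma> * S l'' \<gamma>)))"
        unfolding y_def w_def by (simp add: sum_distrib_left sum_distrib_right mult_ac)
      also have "\<dots> = (\<Sum>\<gamma>\<in>?D. \<Sum>l\<in>blk j. \<Sum>\<beta>\<in>?D. w' l * (S l \<beta> * (mom_mat v \<beta> \<gamma> * S l'' \<gamma>)))"
        by (rule sum.cong[OF refl], rule sum.swap)
      also have "\<dots> = (\<Sum>l\<in>blk j. \<Sum>\<gamma>\<in>?D. \<Sum>\<beta>\<in>?D. w' l * (S l \<beta> * (mom_mat v \<beta> \<gamma> * S l'' \<gamma>)))"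
        by (rule sum.swap)
      also have "\<dots> = (\<Sum>l\<in>blk j. w' l * (\<Sum>\<gamma>\<in>?D. (\<Sum>\<beta>\<in>?D. S l \<beta> * mom_mat v \<beta> \<gamma>) * S l'' \<gamma>))"
        by (simp add: sum_distrib_left sum_distrib_right mult_ac)
      finally show ?thesis .
    qed
    also have "\<dots> = (\<Sum>l\<in>blk j. w' l * H l l'')"
    proof (rule sum.cong[OF refl])
      fix l :: "'d mi" assume l: "l \<in> blk j"
      have "(\<Sum>\<gamma>\<in>?D. (\<Sum>\<beta>\<in>?D. S l \<beta> * mom_mat v \<beta> \<gamma>) * S l'' \<gamma>) = (\<Sum>\<gamma>\<in>?D. Rmat S v l \<gamma> * S l'' \<gamma>)"
        using R[OF l] by simp
      also have "\<dots> = (\<Sum>\<gamma>\<in>{\<gamma>. deg_mi \<gamma> \<le> deg_mi l''}. Rmat S v l \<gamma> * S l'' \<gamma>)"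
        using that by (intro sum_ext_S[OF D(1)]) simp
      also have "\<dots> = H l l''" by (rule D(4))
      finally show "w' l * (\<Sum>\<gamma>\<in>?D. (\<Sum>\<beta>\<in>?D. S l \<beta> * mom_mat v \<beta> \<gamma>) * S l'' \<gamma>) = w' l * H l l''" by simp
    qed
    also have "\<dots> = 0"
    proof (cases "deg_mi l'' = j")
      case True then show ?thesis using z by (auto simp: blk_def)
    next
      case False then show ?thesis by (intro sum.neutral) (auto simp: blk_def D(3))
    qed
    finally show ?thesis .
  qed
  have st2: "y \<gamma> = 0" if g: "\<gamma> \<in> ?D" for \<gamma>
  proof -
    have pre: "\<forall>\<gamma>'. Suc (deg_mi \<gamma>) \<le> deg_mi \<gamma>' \<longrightarrow> (if \<gamma>' = \<gamma> then 1 else 0) = (0::complex)" by auto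
    obtain d where d: "\<forall>\<gamma>'. (\<Sum>l\<in>{l. deg_mi l < Suc (deg_mi \<gamma>)}. d l * S l \<gamma>') = (if \<gamma>' = \<gamma> then 1 else 0)"
      using tri_solve[OF D(1) D(2) pre] by blast
    have "y \<gamma> = (\<Sum>\<gamma>'\<in>?D. y \<gamma>' * (if \<gamma>' = \<gamma> then 1 else 0))"
      using g by (simp add: if_distrib cong: if_cong)
    also have "\<dots> = (\<Sum>\<gamma>'\<in>?D. y \<gamma>' * (\<Sum>l\<in>{l. deg_mi l < Suc (deg_mi \<gamma>)}. d l * S l \<gamma>'))"
      using d by simp
    also have "\<dots> = (\<Sum>l\<in>{l. deg_mi l < Suc (deg_mi \<gamma>)}. d l * (\<Sum>\<gamma>'\<in>?D. y \<gamma>' * S l \<gamma>'))"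
      by (simp add: sum_distrib_left sum.swap[of _ ?D] mult_ac)
    also have "\<dots> = 0"
      by (rule sum.neutral) (use g st1 in auto)
    finally show ?thesis .
  qed
  obtain B where B: "is_inverse_on ?D ?D (mom_mat v) B"
    using qd unfolding quasi_definite_def nonsingular_on_def by blast
  have st3: "w \<beta> = 0" if b: "\<beta> \<in> ?D" for \<beta>
  proof -
    have "w \<beta> = (\<Sum>\<beta>'\<in>?D. w \<beta>' * (if \<beta>' = \<beta> then 1 else 0))"
      using b by (simp add: if_distrib cong: if_cong)
    also have "\<dots> = (\<Sum>\<beta>'\<in>?D. w \<beta>' * (\<Sum>\<gamma>\<in>?D. mom_mat v \<beta>' \<gamma> * B \<gamma> \<beta>))"
      by (rule sum.cong[OF refl]) (use B b in \<open>auto simp: is_inverse_on_def mmul_def\<close>)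
    also have "\<dots> = (\<Sum>\<gamma>\<in>?D. y \<gamma> * B \<gamma> \<beta>)"
      unfolding y_def sum_distrib_left sum_distrib_right by (subst sum.swap) (simp add: mult_ac)
    also have "\<dots> = 0" by (rule sum.neutral) (use st2 in auto)
    finally show ?thesis .
  qed
  show ?thesis
  proof
    fix l :: "'d mi" assume l: "l \<in> blk j"
    have "w l = (\<Sum>l'\<in>blk j. if l' = l then w' l' else 0)"
      unfolding w_def by (rule sum.cong) (use l in \<open>auto simp: blk_def D(2)\<close>)
    also have "\<dots> = w' l" using l by (simp add: sum.delta'[OF finite_blk])
    finally show "w' l = 0" using st3 l by (auto simp: blk_def)
  qed
qed


definition conv :: "('a, 'b) qcol \<Rightarrow> ('a, 'c) qcol" where
  "conv j = (case j of RCol \<beta> \<Rightarrow> RCol \<beta> | NCol n \<Rightarrow> NCol n | LCol _ \<Rightarrow> NCol 0)"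

lemma conv_simps[simp]: "conv (RCol \<beta>) = RCol \<beta>" "conv (NCol n) = NCol n"
  by (auto simp: conv_def)

lemma inv_transfer:
  fixes l0 :: "'d::finite mi \<Rightarrow> 'c \<Rightarrow> complex" and l1 :: "'d mi \<Rightarrow> 'b \<Rightarrow> complex"
  assumes B: "is_inverse_on I (RCol ` J0 \<union> NCol ` {..<r}) (bmat S R p l0) B"
  shows "is_inverse_on I (RCol ` J0 \<union> NCol ` {..<r}) (bmat S R p l1) (\<lambda>j. B (conv j))"
proof -
  let ?J' = "RCol ` J0 \<union> NCol ` {..<r} :: ('d mi, 'b) qcol set"
  let ?J = "RCol ` J0 \<union> NCol ` {..<r} :: ('d mi, 'c) qcol set"
  have inj: "inj_on (conv :: ('d mi, 'b) qcol \<Rightarrow> ('d mi, 'c) qcol) ?J'"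
    by (auto simp: inj_on_def)
  have img: "(conv :: ('d mi, 'b) qcol \<Rightarrow> ('d mi, 'c) qcol) ` ?J' = ?J"
    by (auto simp: image_Un image_image)
  have M: "bmat S R p l1 i j = bmat S R p l0 i (conv j)" if "j \<in> ?J'" for i j
    using that by (auto simp: bmat_def)
  have s: "(\<Sum>j\<in>?J'. bmat S R p l1 i j * B (conv j) i') = (\<Sum>j\<in>?J. bmat S R p l0 i j * B j i')" for i i'
  proof -
    have "(\<Sum>j\<in>?J'. bmat S R p l1 i j * B (conv j) i') = (\<Sum>j\<in>?J'. bmat S R p l0 i (conv j) * B (conv j) i')"
      by (rule sum.cong) (auto simp: M)
    also have "\<dots> = (\<Sum>j\<in>?J. bmat S R p l0 i j * B j i')"
      using sum.reindex[OF inj, of "\<lambda>j. bmat S R p l0 i j * B j i'"] img by simp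
    finally show ?thesis .
  qed
  have B2: "\<And>a b. a \<in> ?J \<Longrightarrow> b \<in> ?J \<Longrightarrow> (\<Sum>i\<in>I. B a i * bmat S R p l0 i b) = (if a = b then 1 else 0)"
    using B unfolding is_inverse_on_def mmul_def by blast
  show ?thesis
    unfolding is_inverse_on_def mmul_def
  proof (intro conjI ballI)
    fix i i' assume "i \<in> I" "i' \<in> I"
    then show "(\<Sum>j\<in>?J'. bmat S R p l1 i j * B (conv j) i') = (if i = i' then 1 else 0)"
      using B s unfolding is_inverse_on_def mmul_def by simp
  next
    fix j j' assume j: "j \<in> ?J'" and j': "j' \<in> ?J'"
    have cj: "conv j \<in> ?J" "conv j' \<in> ?J" using j j' img by blast+
    have eq: "(conv j = (conv j' :: ('d mi, 'c) qcol)) = (j = j')" by (rule inj_on_eq_iff[OF inj j j'])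
    have "(\<Sum>i\<in>I. B (conv j) i * bmat S R p l1 i j') = (\<Sum>i\<in>I. B (conv j) i * bmat S R p l0 i (conv j'))"
      using M[OF j'] by simp
    also have "\<dots> = (if conv j = (conv j' :: ('d mi, 'c) qcol) then 1 else 0)"
      by (rule B2[OF cj])
    finally show "(\<Sum>i\<in>I. B (conv j) i * bmat S R p l1 i j') = (if j = j' then 1 else 0)"
      using eq by simp
  qed
qed


lemma qdet_apply:
  fixes l0 :: "'d::finite mi \<Rightarrow> 'c \<Rightarrow> complex" and lastc :: "'d mi \<Rightarrow> 'b \<Rightarrow> complex"
  assumes fin: "finite I" "finite L" "finite J0" and disj: "I \<inter> L = {}"
    and ns: "nonsingular_on I (RCol ` J0 \<union> NCol ` {..<r}) (bmat S R p l0)"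
    and eR: "\<forall>\<beta>\<in>J0. (\<Sum>i\<in>I\<union>L. c i * R i \<beta>) = 0"
    and eN: "\<forall>n<r. (\<Sum>i\<in>I\<union>L. c i * mop S i (p n)) = 0"
  shows "(\<Sum>i\<in>I\<union>L. c i * lastc i b) =
     (\<Sum>l\<in>L. c l * qdet_last I L (RCol ` J0 \<union> NCol ` {..<r}) K (bmat S R p lastc) l (LCol b))"
proof -
  obtain B where B: "is_inverse_on I (RCol ` J0 \<union> NCol ` {..<r}) (bmat S R p l0) B"
    using ns unfolding nonsingular_on_def by blast
  have inv: "\<exists>B. is_inverse_on I (RCol ` J0 \<union> NCol ` {..<r}) (bmat S R p lastc) B"
    using inv_transfer[OF B] by blast
  have "(\<Sum>i\<in>I\<union>L. c i * bmat S R p lastc i (LCol b)) =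
     (\<Sum>l\<in>L. c l * qdet_last I L (RCol ` J0 \<union> NCol ` {..<r}) K (bmat S R p lastc) l (LCol b))"
    by (rule qdet_sol[OF fin(1,2) _ disj inv]) (use fin eR eN in \<open>auto simp: bmat_def\<close>)
  then show ?thesis by (simp add: bmat_def)
qed


lemma coeff:
  fixes S Sh :: "'d::finite mi \<Rightarrow> 'd mi \<Rightarrow> complex" and Q1 :: "'d mpoly"
  assumes S0: "\<forall>\<alpha> \<beta>. deg_mi \<alpha> < deg_mi \<beta> \<longrightarrow> S \<alpha> \<beta> = 0"
    and S1: "\<forall>\<alpha> \<beta>. deg_mi \<alpha> = deg_mi \<beta> \<longrightarrow> S \<alpha> \<beta> = (if \<alpha> = \<beta> then 1 else 0)"
    and Sh1: "\<forall>\<alpha> \<beta>. deg_mi \<alpha> = deg_mi \<beta> \<longrightarrow> Sh \<alpha> \<beta> = (if \<alpha> = \<beta> then 1 else 0)"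
    and fQ: "finite (psupp Q1)" and dQ: "\<forall>a\<in>psupp Q1. deg_mi a \<le> m1"
    and al: "\<alpha> \<in> blk k"
  shows "\<exists>c. (\<forall>r\<in>blk (k+m1). c r = specQ Q1 \<alpha> r) \<and>
     (\<forall>\<phi>. (\<Sum>l\<in>{l. deg_mi l \<le> k+m1}. c l * (\<Sum>\<beta>\<in>{\<beta>. deg_mi \<beta> \<le> deg_mi l}. S l \<beta> * \<phi> \<beta>)) =
          (\<Sum>a\<in>psupp Q1. \<Sum>b\<in>{b. deg_mi b \<le> k}. Q1 a * Sh \<alpha> b * \<phi> (madd a b)))"
proof -
  let ?Dk = "{b::'d mi. deg_mi b \<le> k}"
  let ?DN = "{b::'d mi. deg_mi b \<le> k + m1}"
  have dega: "deg_mi \<alpha> = k" using al by (simp add: blk_def)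
  define T where "T \<gamma> = (\<Sum>a\<in>psupp Q1. \<Sum>b\<in>?Dk. if madd a b = \<gamma> then Q1 a * Sh \<alpha> b else 0)" for \<gamma>
  have Tsupp: "\<forall>\<gamma>. Suc (k+m1) \<le> deg_mi \<gamma> \<longrightarrow> T \<gamma> = 0"
  proof (intro allI impI)
    fix \<gamma> :: "'d mi" assume g: "Suc (k+m1) \<le> deg_mi \<gamma>"
    have "madd a b \<noteq> \<gamma>" if "a \<in> psupp Q1" "b \<in> ?Dk" for a b
    proof
      assume "madd a b = \<gamma>"
      then have "deg_mi \<gamma> = deg_mi a + deg_mi b" by auto
      then show False using g that dQ by fastforce
    qed
    then show "T \<gamma> = 0" unfolding T_def by (auto intro!: sum.neutral)
  qed
  obtain c where c1: "\<forall>\<gamma>. (\<Sum>l\<in>{l. deg_mi l < Suc (k+m1)}. c l * S l \<gamma>) = T \<gamma>"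
     and c2: "\<forall>l. Suc (deg_mi l) = Suc (k+m1) \<longrightarrow> c l = T l"
    using tri_solve[OF S0 S1 Tsupp] by blast
  have setEq: "{l::'d mi. deg_mi l < Suc (k+m1)} = ?DN" by auto
  have top: "c r = specQ Q1 \<alpha> r" if r: "r \<in> blk (k+m1)" for r
  proof -
    have dr: "deg_mi r = k + m1" using r by (simp add: blk_def)
    have inner: "(\<Sum>b\<in>?Dk. if madd a b = r then Q1 a * Sh \<alpha> b else 0) = (if madd a \<alpha> = r then Q1 a else 0)"
      if a: "a \<in> psupp Q1" for a
    proof -
      have "(\<Sum>b\<in>?Dk. if madd a b = r then Q1 a * Sh \<alpha> b else 0) =
            (\<Sum>b\<in>?Dk. if b = \<alpha> then (if madd a \<alpha> = r then Q1 a else 0) else 0)"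
      proof (rule sum.cong[OF refl])
        fix b assume b: "b \<in> ?Dk"
        show "(if madd a b = r then Q1 a * Sh \<alpha> b else 0) = (if b = \<alpha> then (if madd a \<alpha> = r then Q1 a else 0) else 0)"
        proof (cases "b = \<alpha>")
          case True then show ?thesis using Sh1 by simp
        next
          case False
          show ?thesis
          proof (cases "madd a b = r")
            case True
            then have "deg_mi a + deg_mi b = k + m1" using dr by (metis deg_madd)
            then have "deg_mi b = k" using dQ a b by fastforce
            then have "Sh \<alpha> b = 0" using Sh1 dega False by (metis)
            then show ?thesis using False by simp
          qed (use False in simp)
        qed
      qed
      also have "\<dots> = (if madd a \<alpha> = r then Q1 a else 0)"
        using dega by (simp add: sum.delta'[OF finite_D])
      finally show ?thesis .
    qed
    have "c r = T r" using c2 dr by simp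
    also have "\<dots> = (\<Sum>a\<in>psupp Q1. if madd a \<alpha> = r then Q1 a else 0)"
      unfolding T_def by (rule sum.cong[OF refl]) (rule inner)
    also have "\<dots> = specQ Q1 \<alpha> r" by (rule specQ_sum[OF fQ])
    finally show ?thesis .
  qed
  have phi: "(\<Sum>l\<in>?DN. c l * (\<Sum>\<beta>\<in>{\<beta>. deg_mi \<beta> \<le> deg_mi l}. S l \<beta> * \<phi> \<beta>)) =
          (\<Sum>a\<in>psupp Q1. \<Sum>b\<in>?Dk. Q1 a * Sh \<alpha> b * \<phi> (madd a b))" for \<phi>
  proof -
    have "(\<Sum>l\<in>?DN. c l * (\<Sum>\<beta>\<in>{\<beta>. deg_mi \<beta> \<le> deg_mi l}. S l \<beta> * \<phi> \<beta>)) =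
          (\<Sum>l\<in>?DN. c l * (\<Sum>\<beta>\<in>?DN. S l \<beta> * \<phi> \<beta>))"
    proof (rule sum.cong[OF refl])
      fix l assume l: "l \<in> ?DN"
      have "(\<Sum>\<beta>\<in>?DN. S l \<beta> * \<phi> \<beta>) = (\<Sum>\<beta>\<in>{\<beta>. deg_mi \<beta> \<le> deg_mi l}. S l \<beta> * \<phi> \<beta>)"
        by (rule sum.mono_neutral_right) (use l S0 in auto)
      then show "c l * (\<Sum>\<beta>\<in>{\<beta>. deg_mi \<beta> \<le> deg_mi l}. S l \<beta> * \<phi> \<beta>) = c l * (\<Sum>\<beta>\<in>?DN. S l \<beta> * \<phi> \<beta>)"
        by simp
    qed
    also have "\<dots> = (\<Sum>l\<in>?DN. \<Sum>\<beta>\<in>?DN. c l * S l \<beta> * \<phi> \<beta>)"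
      by (simp add: sum_distrib_left mult.assoc)
    also have "\<dots> = (\<Sum>\<beta>\<in>?DN. \<Sum>l\<in>?DN. c l * S l \<beta> * \<phi> \<beta>)"
      by (rule sum.swap)
    also have "\<dots> = (\<Sum>\<beta>\<in>?DN. T \<beta> * \<phi> \<beta>)"
    proof (rule sum.cong[OF refl])
      fix \<beta>
      have "(\<Sum>l\<in>?DN. c l * S l \<beta> * \<phi> \<beta>) = (\<Sum>l\<in>?DN. c l * S l \<beta>) * \<phi> \<beta>"
        by (simp add: sum_distrib_right)
      also have "\<dots> = T \<beta> * \<phi> \<beta>" using c1 setEq by metis
      finally show "(\<Sum>l\<in>?DN. c l * S l \<beta> * \<phi> \<beta>) = T \<beta> * \<phi> \<beta>" .
    qed
    also have "\<dots> = (\<Sum>\<beta>\<in>?DN. \<Sum>a\<in>psupp Q1. \<Sum>b\<in>?Dk. if madd a b = \<beta> then Q1 a * Sh \<alpha> b * \<phi> \<beta> else 0)"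
      unfolding T_def sum_distrib_right by (intro sum.cong refl) simp
    also have "\<dots> = (\<Sum>a\<in>psupp Q1. \<Sum>\<beta>\<in>?DN. \<Sum>b\<in>?Dk. if madd a b = \<beta> then Q1 a * Sh \<alpha> b * \<phi> \<beta> else 0)"
      by (rule sum.swap)
    also have "\<dots> = (\<Sum>a\<in>psupp Q1. \<Sum>b\<in>?Dk. \<Sum>\<beta>\<in>?DN. if madd a b = \<beta> then Q1 a * Sh \<alpha> b * \<phi> \<beta> else 0)"
      by (rule sum.cong[OF refl], rule sum.swap)
    also have "\<dots> = (\<Sum>a\<in>psupp Q1. \<Sum>b\<in>?Dk. Q1 a * Sh \<alpha> b * \<phi> (madd a b))"
    proof (intro sum.cong[OF refl])
      fix a b assume a: "a \<in> psupp Q1" and b: "b \<in> ?Dk"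
      have "madd a b \<in> ?DN" using a b dQ by fastforce
      then show "(\<Sum>\<beta>\<in>?DN. if madd a b = \<beta> then Q1 a * Sh \<alpha> b * \<phi> \<beta> else 0) = Q1 a * Sh \<alpha> b * \<phi> (madd a b)"
        by (simp add: sum.delta[OF finite_D])
    qed
    finally show ?thesis .
  qed
  show ?thesis using top phi by blast
qed


lemma alpha_facts:
  fixes S H Sh Hh :: "'d::finite mi \<Rightarrow> 'd mi \<Rightarrow> complex" and Q1 Q2 :: "'d mpoly"
  assumes mfu: "mop_fact (fmul Q2 uc) S H" and mfh: "mop_fact (fmul Q1 uc) Sh Hh"
    and fQ1: "finite (psupp Q1)" and fQ2: "finite (psupp Q2)"
    and dQ1: "\<forall>a\<in>psupp Q1. deg_mi a \<le> m1"
    and al: "\<alpha> \<in> blk k"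
  shows "\<exists>c. (\<forall>r\<in>blk (k+m1). c r = specQ Q1 \<alpha> r) \<and>
     (\<forall>x. (\<Sum>l\<in>{l. deg_mi l \<le> k+m1}. c l * mop S l x) = peval Q1 x * mop Sh \<alpha> x) \<and>
     (\<forall>\<gamma>. (\<Sum>l\<in>{l. deg_mi l \<le> k+m1}. c l * Rmat S uc l \<gamma>) = Rmat Sh (fmul Q1 uc) \<alpha> \<gamma>) \<and>
     (\<forall>\<gamma>. (\<Sum>l\<in>{l. deg_mi l \<le> k+m1}. c l * Rmat S (fmul Q2 uc) l \<gamma>) =
            (\<Sum>e\<in>psupp Q2. Q2 e * Rmat Sh (fmul Q1 uc) \<alpha> (madd \<gamma> e)))"
proof -
  note Du = mop_factD[OF mfu] and Dh = mop_factD[OF mfh]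
  let ?Dk = "{b::'d mi. deg_mi b \<le> k}"
  have dega: "deg_mi \<alpha> = k" using al by (simp add: blk_def)
  obtain c where top: "\<forall>r\<in>blk (k+m1). c r = specQ Q1 \<alpha> r"
    and phi: "\<And>\<phi>. (\<Sum>l\<in>{l. deg_mi l \<le> k+m1}. c l * (\<Sum>\<beta>\<in>{\<beta>. deg_mi \<beta> \<le> deg_mi l}. S l \<beta> * \<phi> \<beta>)) =
          (\<Sum>a\<in>psupp Q1. \<Sum>b\<in>?Dk. Q1 a * Sh \<alpha> b * \<phi> (madd a b))"
    using coeff[OF Du(1) Du(2) Dh(2) fQ1 dQ1 al] by blast
  have Rh: "(\<Sum>a\<in>psupp Q1. \<Sum>b\<in>?Dk. Q1 a * Sh \<alpha> b * uc (madd (madd a b) \<delta>)) = Rmat Sh (fmul Q1 uc) \<alpha> \<delta>" for \<delta>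
  proof -
    have m: "madd (madd a b) \<delta> = madd (madd b \<delta>) a" for a b :: "'d mi"
      by (simp add: madd_def fun_eq_iff add_ac)
    have "Rmat Sh (fmul Q1 uc) \<alpha> \<delta> = (\<Sum>b\<in>?Dk. \<Sum>a\<in>psupp Q1. Q1 a * Sh \<alpha> b * uc (madd (madd a b) \<delta>))"
      unfolding Rmat_def fmul_def dega by (simp add: sum_distrib_left m mult_ac)
    also have "\<dots> = (\<Sum>a\<in>psupp Q1. \<Sum>b\<in>?Dk. Q1 a * Sh \<alpha> b * uc (madd (madd a b) \<delta>))"
      by (rule sum.swap)
    finally show ?thesis by simp
  qed
  have valx: "(\<Sum>l\<in>{l. deg_mi l \<le> k+m1}. c l * mop S l x) = peval Q1 x * mop Sh \<alpha> x" for x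
  proof -
    have "(\<Sum>l\<in>{l. deg_mi l \<le> k+m1}. c l * mop S l x) = (\<Sum>a\<in>psupp Q1. \<Sum>b\<in>?Dk. Q1 a * Sh \<alpha> b * mono (madd a b) x)"
      unfolding mop_def by (rule phi)
    also have "\<dots> = peval Q1 x * mop Sh \<alpha> x"
      unfolding peval_def mop_def dega sum_product by (simp add: mono_madd mult_ac)
    finally show ?thesis .
  qed
  have valR: "(\<Sum>l\<in>{l. deg_mi l \<le> k+m1}. c l * Rmat S uc l \<gamma>) = Rmat Sh (fmul Q1 uc) \<alpha> \<gamma>" for \<gamma>
  proof -
    have "(\<Sum>l\<in>{l. deg_mi l \<le> k+m1}. c l * Rmat S uc l \<gamma>) = (\<Sum>a\<in>psupp Q1. \<Sum>b\<in>?Dk. Q1 a * Sh \<alpha> b * uc (madd (madd a b) \<gamma>))"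
      unfolding Rmat_def by (rule phi)
    then show ?thesis using Rh by simp
  qed
  have valU: "(\<Sum>l\<in>{l. deg_mi l \<le> k+m1}. c l * Rmat S (fmul Q2 uc) l \<gamma>) =
            (\<Sum>e\<in>psupp Q2. Q2 e * Rmat Sh (fmul Q1 uc) \<alpha> (madd \<gamma> e))" for \<gamma>
  proof -
    have m: "madd (madd (madd a b) \<gamma>) e = madd (madd a b) (madd \<gamma> e)" for a b e :: "'d mi"
      by (simp add: madd_def fun_eq_iff add_ac)
    have "(\<Sum>l\<in>{l. deg_mi l \<le> k+m1}. c l * Rmat S (fmul Q2 uc) l \<gamma>) =
        (\<Sum>a\<in>psupp Q1. \<Sum>b\<in>?Dk. Q1 a * Sh \<alpha> b * fmul Q2 uc (madd (madd a b) \<gamma>))"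
      unfolding Rmat_def by (rule phi)
    also have "\<dots> = (\<Sum>a\<in>psupp Q1. \<Sum>b\<in>?Dk. \<Sum>e\<in>psupp Q2. Q2 e * (Q1 a * Sh \<alpha> b * uc (madd (madd a b) (madd \<gamma> e))))"
      unfolding fmul_def by (simp add: sum_distrib_left m mult_ac)
    also have "\<dots> = (\<Sum>a\<in>psupp Q1. \<Sum>e\<in>psupp Q2. \<Sum>b\<in>?Dk. Q2 e * (Q1 a * Sh \<alpha> b * uc (madd (madd a b) (madd \<gamma> e))))"
      by (rule sum.cong[OF refl], rule sum.swap)
    also have "\<dots> = (\<Sum>e\<in>psupp Q2. \<Sum>a\<in>psupp Q1. \<Sum>b\<in>?Dk. Q2 e * (Q1 a * Sh \<alpha> b * uc (madd (madd a b) (madd \<gamma> e))))"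
      by (rule sum.swap)
    also have "\<dots> = (\<Sum>e\<in>psupp Q2. Q2 e * (\<Sum>a\<in>psupp Q1. \<Sum>b\<in>?Dk. Q1 a * Sh \<alpha> b * uc (madd (madd a b) (madd \<gamma> e))))"
      by (simp add: sum_distrib_left)
    also have "\<dots> = (\<Sum>e\<in>psupp Q2. Q2 e * Rmat Sh (fmul Q1 uc) \<alpha> (madd \<gamma> e))"
      by (simp add: Rh)
    finally show ?thesis .
  qed
  show ?thesis using top valx valR valU by blast
qed


lemma low_vanish:
  fixes S H :: "'d::finite mi \<Rightarrow> 'd mi \<Rightarrow> complex"
  assumes mfu: "mop_fact v S H" and qd: "quasi_definite v"
    and fc: "\<forall>\<gamma>. deg_mi \<gamma> < n \<longrightarrow> (\<Sum>l\<in>{l. deg_mi l \<le> N}. c l * Rmat S v l \<gamma>) = 0"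
    and nN: "n \<le> Suc N" and l0: "deg_mi l0 < n"
  shows "c l0 = 0"
proof -
  note Du = mop_factD[OF mfu]
  let ?j = "deg_mi l0"
  let ?DN = "{l::'d mi. deg_mi l \<le> N}"
  have z: "\<forall>l''\<in>blk ?j. (\<Sum>l\<in>blk ?j. c l * H l l'') = 0"
  proof
    fix l'' :: "'d mi" assume l'': "l'' \<in> blk ?j"
    have "(\<Sum>l\<in>blk ?j. c l * H l l'') = (\<Sum>l\<in>?DN. c l * H l l'')"
      by (rule sum.mono_neutral_left) (use l'' nN l0 Du(3) in \<open>auto simp: blk_def\<close>)
    also have "\<dots> = (\<Sum>l\<in>?DN. c l * (\<Sum>\<gamma>\<in>{\<gamma>. deg_mi \<gamma> \<le> deg_mi l''}. Rmat S v l \<gamma> * S l'' \<gamma>))"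
      by (simp add: Du(4))
    also have "\<dots> = (\<Sum>l\<in>?DN. \<Sum>\<gamma>\<in>{\<gamma>. deg_mi \<gamma> \<le> deg_mi l''}. c l * Rmat S v l \<gamma> * S l'' \<gamma>)"
      by (simp add: sum_distrib_left mult.assoc)
    also have "\<dots> = (\<Sum>\<gamma>\<in>{\<gamma>. deg_mi \<gamma> \<le> deg_mi l''}. \<Sum>l\<in>?DN. c l * Rmat S v l \<gamma> * S l'' \<gamma>)"
      by (rule sum.swap)
    also have "\<dots> = (\<Sum>\<gamma>\<in>{\<gamma>. deg_mi \<gamma> \<le> deg_mi l''}. (\<Sum>l\<in>?DN. c l * Rmat S v l \<gamma>) * S l'' \<gamma>)"
      by (simp add: sum_distrib_right)
    also have "\<dots> = 0"
      by (rule sum.neutral) (use l'' l0 fc in \<open>auto simp: blk_def\<close>)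
    finally show "(\<Sum>l\<in>blk ?j. c l * H l l'') = 0" .
  qed
  show ?thesis using Hblock[OF mfu qd z] by (simp add: blk_def)
qed


theorem mainTheorem6:
  fixes u :: "(real^'d::finite \<Rightarrow> complex) \<Rightarrow> complex"
    and Q1 Q2 :: "'d mpoly"
    and uc :: "'d mi \<Rightarrow> complex"
    and S H Sh Hh :: "'d mi \<Rightarrow> 'd mi \<Rightarrow> complex"
    and k :: nat
    and p :: "nat \<Rightarrow> 'd \<Rightarrow> complex"
  defines "m1 \<equiv> pdeg Q1"
    and "m2 \<equiv> pdeg Q2"
    and "uh \<equiv> fmul Q1 uc"
    and "R \<equiv> Rmat S uc"
    and "r1 \<equiv> Nk CARD('d) (int k + int (pdeg Q1) - 1) - Nk CARD('d) (int k - 1)"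
    and "F \<equiv> specQ Q1"
  assumes fd: "fast_decreasing_distribution u"
    and polys: "is_poly Q1" "is_poly Q2"
    and cop: "coprime_poly Q1 Q2"
    and supp: "\<forall>x\<in>dist_supp u. peval Q2 (\<lambda>a. complex_of_real (x $ a)) \<noteq> 0"
    and check: "fmul Q2 uc = dmom u"
    and qd: "quasi_definite (dmom u)" "quasi_definite uh"
    and fact: "mop_fact (dmom u) S H" "mop_fact uh Sh Hh"
    and nodes_inj: "inj_on p {..<r1}"
    and nodes_zero: "\<forall>j<r1. peval Q1 (p j) = 0"
  shows
   "(nonsingular_on {\<alpha>. deg_mi \<alpha> < k + m1} (RCol ` {\<beta>. deg_mi \<beta> < k} \<union> NCol ` {..<r1})
        (bmat S R p (\<lambda>_ _. 0 :: complex)) \<longrightarrow>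
      (\<forall>x. peval Q1 x \<noteq> 0 \<longrightarrow> (\<forall>\<alpha>\<in>blk k.
         mop Sh \<alpha> x = (1 / peval Q1 x) *
           (\<Sum>r\<in>blk (k + m1). F \<alpha> r *
              qdet_last {\<alpha>. deg_mi \<alpha> < k + m1} (blk (k + m1))
                 (RCol ` {\<beta>. deg_mi \<beta> < k} \<union> NCol ` {..<r1}) {LCol ()}
                 (bmat S R p (\<lambda>\<gamma> _. mop S \<gamma> x)) r (LCol ())))) \<and>
      (\<forall>\<alpha>\<in>blk k. \<forall>\<beta>\<in>blk k.
         Hh \<alpha> \<beta> = (\<Sum>r\<in>blk (k + m1). F \<alpha> r *
              qdet_last {\<alpha>. deg_mi \<alpha> < k + m1} (blk (k + m1))
                 (RCol ` {\<beta>. deg_mi \<beta> < k} \<union> NCol ` {..<r1}) (LCol ` blk k)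
                 (bmat S R p R) r (LCol \<beta>))))
    \<and>
    (\<forall>M :: 'd mi set. k \<ge> m2 \<and> finite M \<and>
        card M = Nk CARD('d) (int k - 1) - Nk CARD('d) (int k - int m2 - 1) \<and>
        (\<forall>\<beta>\<in>M. deg_mi \<beta> < k) \<and>
        nonsingular_on {\<alpha>. k - m2 \<le> deg_mi \<alpha> \<and> deg_mi \<alpha> < k + m1} (RCol ` M \<union> NCol ` {..<r1})
          (bmat S R p (\<lambda>_ _. 0 :: complex)) \<longrightarrow>
      (\<forall>x. peval Q1 x \<noteq> 0 \<longrightarrow> (\<forall>\<alpha>\<in>blk k.
         mop Sh \<alpha> x = (1 / peval Q1 x) *
           (\<Sum>r\<in>blk (k + m1). F \<alpha> r *
              qdet_last {\<alpha>. k - m2 \<le> deg_mi \<alpha> \<and> deg_mi \<alpha> < k + m1} (blk (k + m1))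
                 (RCol ` M \<union> NCol ` {..<r1}) {LCol ()}
                 (bmat S R p (\<lambda>\<gamma> _. mop S \<gamma> x)) r (LCol ())))) \<and>
      (\<forall>\<alpha>\<in>blk k. \<forall>\<gamma>\<in>blk (k - m2).
         (\<Sum>\<beta>\<in>blk k. Hh \<alpha> \<beta> * specQ Q2 \<gamma> \<beta>) =
           (\<Sum>r\<in>blk (k + m1). F \<alpha> r *
              qdet_last {\<alpha>. k - m2 \<le> deg_mi \<alpha> \<and> deg_mi \<alpha> < k + m1} (blk (k + m1))
                 (RCol ` M \<union> NCol ` {..<r1}) (LCol ` blk (k - m2))
                 (bmat S R p (\<lambda>\<delta> \<epsilon>. if deg_mi \<delta> = k - m2 then H \<delta> \<epsilon> else 0)) r (LCol \<gamma>))) \<and>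
      (\<forall>\<alpha>\<in>blk k. \<forall>\<beta>\<in>blk k.
         Hh \<alpha> \<beta> = (\<Sum>r\<in>blk (k + m1). F \<alpha> r *
              qdet_last {\<alpha>. k - m2 \<le> deg_mi \<alpha> \<and> deg_mi \<alpha> < k + m1} (blk (k + m1))
                 (RCol ` M \<union> NCol ` {..<r1}) (LCol ` blk k)
                 (bmat S R p R) r (LCol \<beta>))))"
proof -
  have fQ1: "finite (psupp Q1)" using polys(1) by (simp add: is_poly_def)
  have fQ2: "finite (psupp Q2)" using polys(2) by (simp add: is_poly_def)
  have dQ1: "\<forall>a\<in>psupp Q1. deg_mi a \<le> m1" unfolding m1_def pdeg_def using fQ1 by (auto intro: Max_ge)
  have dQ2: "\<forall>a\<in>psupp Q2. deg_mi a \<le> m2" unfolding m2_def pdeg_def using fQ2 by (auto intro: Max_ge)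
  have mfu: "mop_fact (fmul Q2 uc) S H" using fact(1) check by simp
  have qdu: "quasi_definite (fmul Q2 uc)" using qd(1) check by simp
  have mfh: "mop_fact (fmul Q1 uc) Sh Hh" using fact(2) uh_def by simp
  let ?DN = "{l::'d mi. deg_mi l \<le> k+m1}"
  let ?L = "blk (k+m1) :: 'd mi set"
  have AF: "\<exists>c. (\<forall>r\<in>blk (k+m1). c r = specQ Q1 \<alpha> r) \<and>
     (\<forall>x. (\<Sum>l\<in>?DN. c l * mop S l x) = peval Q1 x * mop Sh \<alpha> x) \<and>
     (\<forall>\<gamma>. (\<Sum>l\<in>?DN. c l * Rmat S uc l \<gamma>) = Rmat Sh (fmul Q1 uc) \<alpha> \<gamma>) \<and>
     (\<forall>\<gamma>. (\<Sum>l\<in>?DN. c l * Rmat S (fmul Q2 uc) l \<gamma>) =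
            (\<Sum>e\<in>psupp Q2. Q2 e * Rmat Sh (fmul Q1 uc) \<alpha> (madd \<gamma> e)))" if "\<alpha> \<in> blk k" for \<alpha>
    by (rule alpha_facts[OF mfu mfh fQ1 fQ2 dQ1 that])
  have dega: "deg_mi \<alpha> = k" if "\<alpha> \<in> blk k" for \<alpha> :: "'d mi" using that by (simp add: blk_def)
  have P1: "(nonsingular_on {\<alpha>. deg_mi \<alpha> < k + m1} (RCol ` {\<beta>. deg_mi \<beta> < k} \<union> NCol ` {..<r1})
        (bmat S R p (\<lambda>_ _. 0 :: complex)) \<longrightarrow>
      (\<forall>x. peval Q1 x \<noteq> 0 \<longrightarrow> (\<forall>\<alpha>\<in>blk k.
         mop Sh \<alpha> x = (1 / peval Q1 x) *
           (\<Sum>r\<in>blk (k + m1). F \<alpha> r *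
              qdet_last {\<alpha>. deg_mi \<alpha> < k + m1} (blk (k + m1))
                 (RCol ` {\<beta>. deg_mi \<beta> < k} \<union> NCol ` {..<r1}) {LCol ()}
                 (bmat S R p (\<lambda>\<gamma> _. mop S \<gamma> x)) r (LCol ())))) \<and>
      (\<forall>\<alpha>\<in>blk k. \<forall>\<beta>\<in>blk k.
         Hh \<alpha> \<beta> = (\<Sum>r\<in>blk (k + m1). F \<alpha> r *
              qdet_last {\<alpha>. deg_mi \<alpha> < k + m1} (blk (k + m1))
                 (RCol ` {\<beta>. deg_mi \<beta> < k} \<union> NCol ` {..<r1}) (LCol ` blk k)
                 (bmat S R p R) r (LCol \<beta>))))"
  proof (intro impI)
    let ?I = "{\<alpha>::'d mi. deg_mi \<alpha> < k + m1}"
    let ?J = "RCol ` {\<beta>::'d mi. deg_mi \<beta> < k} \<union> NCol ` {..<r1}"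
    assume ns: "nonsingular_on ?I ?J (bmat S R p (\<lambda>_ _. 0 :: complex))"
    have IL: "?I \<union> ?L = ?DN" by (auto simp: blk_def)
    have disj: "?I \<inter> ?L = {}" by (auto simp: blk_def)
    have per: "(\<forall>x. peval Q1 x \<noteq> 0 \<longrightarrow>
         mop Sh \<alpha> x = (1 / peval Q1 x) *
           (\<Sum>r\<in>blk (k + m1). F \<alpha> r *
              qdet_last ?I ?L ?J {LCol ()} (bmat S R p (\<lambda>\<gamma> _. mop S \<gamma> x)) r (LCol ()))) \<and>
      (\<forall>\<beta>\<in>blk k. Hh \<alpha> \<beta> = (\<Sum>r\<in>blk (k + m1). F \<alpha> r *
              qdet_last ?I ?L ?J (LCol ` blk k) (bmat S R p R) r (LCol \<beta>)))"
      if al: "\<alpha> \<in> blk k" for \<alpha>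
    proof -
      obtain c where top: "\<forall>r\<in>blk (k+m1). c r = specQ Q1 \<alpha> r"
        and valx: "\<forall>x. (\<Sum>l\<in>?DN. c l * mop S l x) = peval Q1 x * mop Sh \<alpha> x"
        and valR: "\<forall>\<gamma>. (\<Sum>l\<in>?DN. c l * Rmat S uc l \<gamma>) = Rmat Sh (fmul Q1 uc) \<alpha> \<gamma>"
        using AF[OF al] by blast
      have eR: "\<forall>\<beta>\<in>{\<beta>. deg_mi \<beta> < k}. (\<Sum>i\<in>?I\<union>?L. c i * R i \<beta>) = 0"
        unfolding IL R_def using valR orth1[OF mfh] dega[OF al] by auto
      have eN: "\<forall>n<r1. (\<Sum>i\<in>?I\<union>?L. c i * mop S i (p n)) = 0"
        unfolding IL using valx nodes_zero by simp
      have Ftop: "(\<Sum>l\<in>?L. c l * X l) = (\<Sum>l\<in>?L. F \<alpha> l * X l)" for X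
        by (rule sum.cong) (use top F_def in auto)
      show ?thesis
      proof (intro conjI allI impI ballI)
        fix x :: "'d \<Rightarrow> complex" assume nz: "peval Q1 x \<noteq> 0"
        have "(\<Sum>i\<in>?I\<union>?L. c i * mop S i x) =
            (\<Sum>l\<in>?L. c l * qdet_last ?I ?L ?J {LCol ()} (bmat S R p (\<lambda>\<gamma> _. mop S \<gamma> x)) l (LCol ()))"
          using qdet_apply[OF _ _ _ disj ns eR eN, where lastc = "\<lambda>\<gamma> _. mop S \<gamma> x" and b = "()"] by simp
        then have "peval Q1 x * mop Sh \<alpha> x =
            (\<Sum>l\<in>?L. F \<alpha> l * qdet_last ?I ?L ?J {LCol ()} (bmat S R p (\<lambda>\<gamma> _. mop S \<gamma> x)) l (LCol ()))"
          using valx IL Ftop by simp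
        then show "mop Sh \<alpha> x = (1 / peval Q1 x) *
           (\<Sum>r\<in>blk (k + m1). F \<alpha> r *
              qdet_last ?I ?L ?J {LCol ()} (bmat S R p (\<lambda>\<gamma> _. mop S \<gamma> x)) r (LCol ()))"
          using nz by (simp add: field_simps)
      next
        fix \<beta> :: "'d mi" assume b: "\<beta> \<in> blk k"
        have "(\<Sum>i\<in>?I\<union>?L. c i * R i \<beta>) =
            (\<Sum>l\<in>?L. c l * qdet_last ?I ?L ?J (LCol ` blk k) (bmat S R p R) l (LCol \<beta>))"
          using qdet_apply[OF _ _ _ disj ns eR eN, where lastc = R and b = \<beta>] by simp
        moreover have "(\<Sum>i\<in>?I\<union>?L. c i * R i \<beta>) = Hh \<alpha> \<beta>"
          unfolding IL R_def using valR orth2[OF mfh] dega[OF al] b by (simp add: blk_def)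
        ultimately show "Hh \<alpha> \<beta> = (\<Sum>r\<in>blk (k + m1). F \<alpha> r *
              qdet_last ?I ?L ?J (LCol ` blk k) (bmat S R p R) r (LCol \<beta>))"
          using Ftop by simp
      qed
    qed
    then show "(\<forall>x. peval Q1 x \<noteq> 0 \<longrightarrow> (\<forall>\<alpha>\<in>blk k.
         mop Sh \<alpha> x = (1 / peval Q1 x) *
           (\<Sum>r\<in>blk (k + m1). F \<alpha> r *
              qdet_last ?I ?L ?J {LCol ()} (bmat S R p (\<lambda>\<gamma> _. mop S \<gamma> x)) r (LCol ())))) \<and>
      (\<forall>\<alpha>\<in>blk k. \<forall>\<beta>\<in>blk k.
         Hh \<alpha> \<beta> = (\<Sum>r\<in>blk (k + m1). F \<alpha> r *
              qdet_last ?I ?L ?J (LCol ` blk k) (bmat S R p R) r (LCol \<beta>)))"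
      by blast
  qed
  have P2: "(\<forall>M :: 'd mi set. k \<ge> m2 \<and> finite M \<and>
        card M = Nk CARD('d) (int k - 1) - Nk CARD('d) (int k - int m2 - 1) \<and>
        (\<forall>\<beta>\<in>M. deg_mi \<beta> < k) \<and>
        nonsingular_on {\<alpha>. k - m2 \<le> deg_mi \<alpha> \<and> deg_mi \<alpha> < k + m1} (RCol ` M \<union> NCol ` {..<r1})
          (bmat S R p (\<lambda>_ _. 0 :: complex)) \<longrightarrow>
      (\<forall>x. peval Q1 x \<noteq> 0 \<longrightarrow> (\<forall>\<alpha>\<in>blk k.
         mop Sh \<alpha> x = (1 / peval Q1 x) *
           (\<Sum>r\<in>blk (k + m1). F \<alpha> r *
              qdet_last {\<alpha>. k - m2 \<le> deg_mi \<alpha> \<and> deg_mi \<alpha> < k + m1} (blk (k + m1))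
                 (RCol ` M \<union> NCol ` {..<r1}) {LCol ()}
                 (bmat S R p (\<lambda>\<gamma> _. mop S \<gamma> x)) r (LCol ())))) \<and>
      (\<forall>\<alpha>\<in>blk k. \<forall>\<gamma>\<in>blk (k - m2).
         (\<Sum>\<beta>\<in>blk k. Hh \<alpha> \<beta> * specQ Q2 \<gamma> \<beta>) =
           (\<Sum>r\<in>blk (k + m1). F \<alpha> r *
              qdet_last {\<alpha>. k - m2 \<le> deg_mi \<alpha> \<and> deg_mi \<alpha> < k + m1} (blk (k + m1))
                 (RCol ` M \<union> NCol ` {..<r1}) (LCol ` blk (k - m2))
                 (bmat S R p (\<lambda>\<delta> \<epsilon>. if deg_mi \<delta> = k - m2 then H \<delta> \<epsilon> else 0)) r (LCol \<gamma>))) \<and>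
      (\<forall>\<alpha>\<in>blk k. \<forall>\<beta>\<in>blk k.
         Hh \<alpha> \<beta> = (\<Sum>r\<in>blk (k + m1). F \<alpha> r *
              qdet_last {\<alpha>. k - m2 \<le> deg_mi \<alpha> \<and> deg_mi \<alpha> < k + m1} (blk (k + m1))
                 (RCol ` M \<union> NCol ` {..<r1}) (LCol ` blk k)
                 (bmat S R p R) r (LCol \<beta>))))"
  proof (intro allI impI, elim conjE)
    fix M :: "'d mi set"
    let ?I = "{\<alpha>::'d mi. k - m2 \<le> deg_mi \<alpha> \<and> deg_mi \<alpha> < k + m1}"
    let ?J = "RCol ` M \<union> NCol ` {..<r1}"
    assume km: "m2 \<le> k" and fM: "finite M" and cM: "card M = Nk CARD('d) (int k - 1) - Nk CARD('d) (int k - int m2 - 1)"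
      and Mk: "\<forall>\<beta>\<in>M. deg_mi \<beta> < k"
      and ns: "nonsingular_on ?I ?J (bmat S R p (\<lambda>_ _. 0 :: complex))"
    have disj: "?I \<inter> ?L = {}" by (auto simp: blk_def)
    have ILsub: "?I \<union> ?L \<subseteq> ?DN" by (auto simp: blk_def)
    have per: "(\<forall>x. peval Q1 x \<noteq> 0 \<longrightarrow>
         mop Sh \<alpha> x = (1 / peval Q1 x) *
           (\<Sum>r\<in>blk (k + m1). F \<alpha> r *
              qdet_last ?I ?L ?J {LCol ()} (bmat S R p (\<lambda>\<gamma> _. mop S \<gamma> x)) r (LCol ()))) \<and>
      (\<forall>\<gamma>\<in>blk (k - m2).
         (\<Sum>\<beta>\<in>blk k. Hh \<alpha> \<beta> * specQ Q2 \<gamma> \<beta>) =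
           (\<Sum>r\<in>blk (k + m1). F \<alpha> r *
              qdet_last ?I ?L ?J (LCol ` blk (k - m2))
                 (bmat S R p (\<lambda>\<delta> \<epsilon>. if deg_mi \<delta> = k - m2 then H \<delta> \<epsilon> else 0)) r (LCol \<gamma>))) \<and>
      (\<forall>\<beta>\<in>blk k. Hh \<alpha> \<beta> = (\<Sum>r\<in>blk (k + m1). F \<alpha> r *
              qdet_last ?I ?L ?J (LCol ` blk k) (bmat S R p R) r (LCol \<beta>)))"
      if al: "\<alpha> \<in> blk k" for \<alpha>
    proof -
      obtain c where top: "\<forall>r\<in>blk (k+m1). c r = specQ Q1 \<alpha> r"
        and valx: "\<forall>x. (\<Sum>l\<in>?DN. c l * mop S l x) = peval Q1 x * mop Sh \<alpha> x"
        and valR: "\<forall>\<gamma>. (\<Sum>l\<in>?DN. c l * Rmat S uc l \<gamma>) = Rmat Sh (fmul Q1 uc) \<alpha> \<gamma>"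
        and valU: "\<forall>\<gamma>. (\<Sum>l\<in>?DN. c l * Rmat S (fmul Q2 uc) l \<gamma>) =
            (\<Sum>e\<in>psupp Q2. Q2 e * Rmat Sh (fmul Q1 uc) \<alpha> (madd \<gamma> e))"
        using AF[OF al] by blast
      have fc: "\<forall>\<gamma>. deg_mi \<gamma> < k - m2 \<longrightarrow> (\<Sum>l\<in>?DN. c l * Rmat S (fmul Q2 uc) l \<gamma>) = 0"
      proof (intro allI impI)
        fix \<gamma> :: "'d mi" assume g: "deg_mi \<gamma> < k - m2"
        have "(\<Sum>e\<in>psupp Q2. Q2 e * Rmat Sh (fmul Q1 uc) \<alpha> (madd \<gamma> e)) = 0"
        proof (rule sum.neutral, rule ballI)
          fix e assume e: "e \<in> psupp Q2"
          have "deg_mi (madd \<gamma> e) < deg_mi \<alpha>" using g dQ2 e km dega[OF al] by fastforce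
          then show "Q2 e * Rmat Sh (fmul Q1 uc) \<alpha> (madd \<gamma> e) = 0" using orth1[OF mfh] by simp
        qed
        then show "(\<Sum>l\<in>?DN. c l * Rmat S (fmul Q2 uc) l \<gamma>) = 0" using valU by simp
      qed
      have low: "c l = 0" if "deg_mi l < k - m2" for l
        by (rule low_vanish[OF mfu qdu fc _ that]) simp
      have sumEq: "(\<Sum>i\<in>?I\<union>?L. c i * f i) = (\<Sum>i\<in>?DN. c i * f i)" for f
        by (rule sum.mono_neutral_left) (use low in \<open>auto simp: blk_def, meson not_le\<close>)
      have eR: "\<forall>\<beta>\<in>M. (\<Sum>i\<in>?I\<union>?L. c i * R i \<beta>) = 0"
        unfolding sumEq R_def using valR orth1[OF mfh] dega[OF al] Mk by auto
      have eN: "\<forall>n<r1. (\<Sum>i\<in>?I\<union>?L. c i * mop S i (p n)) = 0"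
        unfolding sumEq using valx nodes_zero by simp
      have Ftop: "(\<Sum>l\<in>?L. c l * X l) = (\<Sum>l\<in>?L. F \<alpha> l * X l)" for X
        by (rule sum.cong) (use top F_def in auto)
      show ?thesis
      proof (intro conjI allI impI ballI)
        fix x :: "'d \<Rightarrow> complex" assume nz: "peval Q1 x \<noteq> 0"
        have "(\<Sum>i\<in>?I\<union>?L. c i * mop S i x) =
            (\<Sum>l\<in>?L. c l * qdet_last ?I ?L ?J {LCol ()} (bmat S R p (\<lambda>\<gamma> _. mop S \<gamma> x)) l (LCol ()))"
          using qdet_apply[OF _ _ fM disj ns eR eN, where lastc = "\<lambda>\<gamma> _. mop S \<gamma> x" and b = "()"] by simp
        then have "peval Q1 x * mop Sh \<alpha> x =
            (\<Sum>l\<in>?L. F \<alpha> l * qdet_last ?I ?L ?J {LCol ()} (bmat S R p (\<lambda>\<gamma> _. mop S \<gamma> x)) l (LCol ()))"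
          using valx sumEq Ftop by simp
        then show "mop Sh \<alpha> x = (1 / peval Q1 x) *
           (\<Sum>r\<in>blk (k + m1). F \<alpha> r *
              qdet_last ?I ?L ?J {LCol ()} (bmat S R p (\<lambda>\<gamma> _. mop S \<gamma> x)) r (LCol ()))"
          using nz by (simp add: field_simps)
      next
        fix \<gamma> :: "'d mi" assume g: "\<gamma> \<in> blk (k - m2)"
        have dg: "deg_mi \<gamma> = k - m2" using g by (simp add: blk_def)
        let ?lc = "\<lambda>\<delta> \<epsilon>. if deg_mi \<delta> = k - m2 then H \<delta> \<epsilon> else 0"
        have "(\<Sum>i\<in>?I\<union>?L. c i * ?lc i \<gamma>) =
            (\<Sum>l\<in>?L. c l * qdet_last ?I ?L ?J (LCol ` blk (k - m2)) (bmat S R p ?lc) l (LCol \<gamma>))"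
          using qdet_apply[OF _ _ fM disj ns eR eN, where lastc = ?lc and b = \<gamma>] by simp
        moreover have "(\<Sum>i\<in>?I\<union>?L. c i * ?lc i \<gamma>) = (\<Sum>i\<in>?I\<union>?L. c i * Rmat S (fmul Q2 uc) i \<gamma>)"
        proof (rule sum.cong[OF refl])
          fix i assume i: "i \<in> ?I \<union> ?L"
          show "c i * ?lc i \<gamma> = c i * Rmat S (fmul Q2 uc) i \<gamma>"
          proof (cases "deg_mi i = k - m2")
            case True then show ?thesis using orth2[OF mfu, of \<gamma> i] dg by simp
          next
            case False
            then have "deg_mi \<gamma> < deg_mi i" using i dg by (auto simp: blk_def)
            then show ?thesis using orth1[OF mfu] False by simp
          qed
        qed
        moreover have "(\<Sum>i\<in>?I\<union>?L. c i * Rmat S (fmul Q2 uc) i \<gamma>) =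
            (\<Sum>e\<in>psupp Q2. Q2 e * Rmat Sh (fmul Q1 uc) \<alpha> (madd \<gamma> e))"
          using sumEq valU by simp
        moreover have "(\<Sum>e\<in>psupp Q2. Q2 e * Rmat Sh (fmul Q1 uc) \<alpha> (madd \<gamma> e)) =
            (\<Sum>e\<in>psupp Q2. if madd e \<gamma> \<in> blk k then Q2 e * Hh \<alpha> (madd e \<gamma>) else 0)"
        proof (rule sum.cong[OF refl])
          fix e assume e: "e \<in> psupp Q2"
          have le: "deg_mi (madd \<gamma> e) \<le> deg_mi \<alpha>" using dg dQ2 e km dega[OF al] by fastforce
          show "Q2 e * Rmat Sh (fmul Q1 uc) \<alpha> (madd \<gamma> e) = (if madd e \<gamma> \<in> blk k then Q2 e * Hh \<alpha> (madd e \<gamma>) else 0)"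
          proof (cases "madd e \<gamma> \<in> blk k")
            case True then show ?thesis using orth2[OF mfh, of "madd \<gamma> e" \<alpha>] dega[OF al] madd_comm[of e \<gamma>] by (simp add: blk_def)
          next
            case False
            then have "deg_mi (madd \<gamma> e) < deg_mi \<alpha>" using le dega[OF al] madd_comm[of e \<gamma>] by (auto simp: blk_def)
            then show ?thesis using orth1[OF mfh] False by simp
          qed
        qed
        moreover have "(\<Sum>\<beta>\<in>blk k. Hh \<alpha> \<beta> * specQ Q2 \<gamma> \<beta>) =
            (\<Sum>e\<in>psupp Q2. if madd e \<gamma> \<in> blk k then Q2 e * Hh \<alpha> (madd e \<gamma>) else 0)"
        proof -
          have "(\<Sum>\<beta>\<in>blk k. Hh \<alpha> \<beta> * specQ Q2 \<gamma> \<beta>) =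
              (\<Sum>\<beta>\<in>blk k. \<Sum>e\<in>psupp Q2. if madd e \<gamma> = \<beta> then Q2 e * Hh \<alpha> \<beta> else 0)"
            unfolding specQ_sum[OF fQ2, symmetric] by (simp add: sum_distrib_left if_distrib mult.commute cong: if_cong)
          also have "\<dots> = (\<Sum>e\<in>psupp Q2. \<Sum>\<beta>\<in>blk k. if madd e \<gamma> = \<beta> then Q2 e * Hh \<alpha> \<beta> else 0)"
            by (rule sum.swap)
          also have "\<dots> = (\<Sum>e\<in>psupp Q2. if madd e \<gamma> \<in> blk k then Q2 e * Hh \<alpha> (madd e \<gamma>) else 0)"
            by (simp add: sum.delta[OF finite_blk])
          finally show ?thesis .
        qed
        ultimately show "(\<Sum>\<beta>\<in>blk k. Hh \<alpha> \<beta> * specQ Q2 \<gamma> \<beta>) =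
           (\<Sum>r\<in>blk (k + m1). F \<alpha> r *
              qdet_last ?I ?L ?J (LCol ` blk (k - m2)) (bmat S R p ?lc) r (LCol \<gamma>))"
          using Ftop by simp
      next
        fix \<beta> :: "'d mi" assume b: "\<beta> \<in> blk k"
        have "(\<Sum>i\<in>?I\<union>?L. c i * R i \<beta>) =
            (\<Sum>l\<in>?L. c l * qdet_last ?I ?L ?J (LCol ` blk k) (bmat S R p R) l (LCol \<beta>))"
          using qdet_apply[OF _ _ fM disj ns eR eN, where lastc = R and b = \<beta>] by simp
        moreover have "(\<Sum>i\<in>?I\<union>?L. c i * R i \<beta>) = Hh \<alpha> \<beta>"
          unfolding sumEq R_def using valR orth2[OF mfh] dega[OF al] b by (simp add: blk_def)
        ultimately show "Hh \<alpha> \<beta> = (\<Sum>r\<in>blk (k + m1). F \<alpha> r *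
              qdet_last ?I ?L ?J (LCol ` blk k) (bmat S R p R) r (LCol \<beta>))"
          using Ftop by simp
      qed
    qed
    then show "(\<forall>x. peval Q1 x \<noteq> 0 \<longrightarrow> (\<forall>\<alpha>\<in>blk k.
         mop Sh \<alpha> x = (1 / peval Q1 x) *
           (\<Sum>r\<in>blk (k + m1). F \<alpha> r *
              qdet_last ?I ?L ?J {LCol ()} (bmat S R p (\<lambda>\<gamma> _. mop S \<gamma> x)) r (LCol ())))) \<and>
      (\<forall>\<alpha>\<in>blk k. \<forall>\<gamma>\<in>blk (k - m2).
         (\<Sum>\<beta>\<in>blk k. Hh \<alpha> \<beta> * specQ Q2 \<gamma> \<beta>) =
           (\<Sum>r\<in>blk (k + m1). F \<alpha> r *
              qdet_last ?I ?L ?J (LCol ` blk (k - m2))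
                 (bmat S R p (\<lambda>\<delta> \<epsilon>. if deg_mi \<delta> = k - m2 then H \<delta> \<epsilon> else 0)) r (LCol \<gamma>))) \<and>
      (\<forall>\<alpha>\<in>blk k. \<forall>\<beta>\<in>blk k.
         Hh \<alpha> \<beta> = (\<Sum>r\<in>blk (k + m1). F \<alpha> r *
              qdet_last ?I ?L ?J (LCol ` blk k) (bmat S R p R) r (LCol \<beta>)))"
      by blast
  qed
  show ?thesis using P1 P2 by blast
qed


end
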